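(* In the big-action setting below, assume $n\ge2$ and that for all $i$ and all $y\in V$, $f_i(X+y)-f_i(X)\in\wp(k[X])$, so that $f_i(X)\equiv XS_i(X)+c_iX\bmod\wp(k[X])$ with $c_i\in k$ and $S_i(X)=\sum_{j=0}^{s_i}a_{i,j}X^{p^j}$ additive, $s_i\ge1$, $a_{i,s_i}\ne0$. Assume moreover $v=2s_n$. Then $s_1=\dots=s_n=:s$ and $V=Z(\mathrm{Ad}_{f_1})$. Furthermore there exist a divisor $d$ of $s$ and elements $\gamma_2,\dots,\gamma_n\in\mathbb F_{p^d}\setminus\mathbb F_p$ such that, writing $S_1(X)=\sum_{j=0}^sa_jX^{p^j}$, one has $a_j=0$ whenever $d\nmid j$ (i.e. $S_1=\sum_{j=0}^{s/d}a_{jd}X^{p^{jd}}$), and $S_i=\gamma_iS_1$ for all $i\in\{2,\dots,n\}$; moreover $1,\gamma_2,\dots,\gamma_n$ are linearly independent over $\mathbb F_p$. In particular $s\ge2$.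
   Context: Big-action setting. Let $k$ be an algebraically closed field of characteristic $p>0$, $C$ a connected nonsingular projective curve over $k$ of genus $g\ge 2$, and $G$ a finite $p$-subgroup of $\mathrm{Aut}_k(C)$ with $|G|/g>2p/(p-1)$ (a "big action" $(C,G)$). It is known that there is a point $\infty\in C$ such that $G$ equals its own first (wild) ramification group at $\infty$, that $\infty$ is the only ramification point of $C\to C/G\cong\mathbb P^1_k$, that the second lower ramification group $G_2$ of $G$ at $\infty$ is a nontrivial proper subgroup of $G$ equal to the commutator subgroup $D(G)$, and that $C/G_2\cong\mathbb P^1_k$. Assume $G_2\cong(\mathbb Z/p\mathbb Z)^n$ with $n\ge1$. Put $L=k(C)$ and write $L^{G_2}=k(X)$, where $X$ is a coordinate on $C/G_2$ with pole at the image of $\infty$; then $G/G_2$ acts on $k(X)$ by translations $X\mapsto X+y$, $y$ ranging over an $\mathbb F_p$-subspace $V\subset k$ of dimension $v$, giving an exact sequence $0\to G_2\to G\to V\to 0$, $\sigma\mapsto\sigma(X)-X$. Let $\wp(Z)=Z^p-Z$. A polynomial in $k[X]$ is called reduced if it is a $k$-linear combination of monomials $X^j$ with $p\nmid j$; every $f\in k[X]$ is congruent modulo $\wp(k[X])$ to a unique reduced polynomial. Let $A=(\wp(L)\cap k[X])/\wp(k[X])$, an $n$-dimensional $\mathbb F_p$-vector space, and for $\bar f\in A$ let $\deg\bar f=\min\{\deg(f+\wp(P)):P\in k[X]\}$. Fix an $\mathbb F_p$-basis $\bar f_1,\dots,\bar f_n$ of $A$ with $m_i:=\deg\bar f_i$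 such that (a) $p\nmid m_i$, (b) $m_1\le\dots\le m_n$, (c) for all $(\lambda_1,\dots,\lambda_n)\in\mathbb F_p^n\setminus\{0\}$, $\deg(\sum_i\lambda_i\bar f_i)=\max_i\deg(\lambda_i\bar f_i)$. Let $f_i\in k[X]$ be the reduced representative of $\bar f_i$ (so $\deg f_i=m_i$); then $L=k(X,W_1,\dots,W_n)$ with $W_i^p-W_i=f_i(X)$. Palindromic polynomial: for $f(X)=XS(X)+cX$ with $S(X)=\sum_{j=0}^{s}a_jX^{p^j}$, $s\ge1$, $a_s\ne0$, define the additive polynomial $\mathrm{Ad}_f(X)=\frac1{a_s}\sum_{j=0}^{s}(a_j^{p^s}X^{p^{s+j}}+a_j^{p^{s-j}}X^{p^{s-j}})$, and let $Z(\mathrm{Ad}_f)\subset k$ be its set of roots. $\mathbb F_{p^d}$ denotes the subfield of $k$ with $p^d$ elements. *)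

theory Defs
  imports "HOL-Computational_Algebra.Polynomial"
begin

definition alg_closed :: "'k::field itself \<Rightarrow> bool" where
  "alg_closed _ \<longleftrightarrow> (\<forall>q :: 'k poly. degree q > 0 \<longrightarrow> (\<exists>x. poly q x = 0))"

definition wp :: "nat \<Rightarrow> 'k::field poly \<Rightarrow> 'k poly" where
  "wp p P = P ^ p - P"

definition reduced :: "nat \<Rightarrow> 'k::field poly \<Rightarrow> bool" where
  "reduced p f \<longleftrightarrow> (\<forall>j. p dvd j \<longrightarrow> coeff f j = 0)"

definition deg_cls :: "nat \<Rightarrow> 'k::field poly \<Rightarrow> nat" where
  "deg_cls p f = (LEAST d. \<exists>P. degree (f + wp p P) = d)"

definition add_poly :: "nat \<Rightarrow> (nat \<Rightarrow> 'k::field) \<Rightarrow> nat \<Rightarrow> 'k poly" where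
  "add_poly p a s = (\<Sum>j\<le>s. monom (a j) (p ^ j))"

text \<open>The palindromic polynomial Ad_f for f = X S(X) + c X, S = add_poly p a s.\<close>
definition Ad :: "nat \<Rightarrow> (nat \<Rightarrow> 'k::field) \<Rightarrow> nat \<Rightarrow> 'k poly" where
  "Ad p a s = smult (1 / a s)
     (\<Sum>j\<le>s. monom (a j ^ (p ^ s)) (p ^ (s + j)) + monom (a j ^ (p ^ (s - j))) (p ^ (s - j)))"

definition Fq :: "nat \<Rightarrow> 'k::field set" where
  "Fq q = {x. x ^ q = x}"

end

theory Submission
  imports Defs "HOL-Computational_Algebra.Primes"
begin


lemma frob_add:
  fixes x y :: "'a::comm_semiring_1"
  assumes "CHAR('a) = p" "prime p"
  shows "(x + y) ^ (p ^ m) = x ^ (p ^ m) + y ^ (p ^ m)"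
  using freshmans_dream'[of "p^m" m x y] assms by simp

lemma frob_diff:
  fixes x y :: "'a::comm_ring_1"
  assumes "CHAR('a) = p" "prime p"
  shows "(x - y) ^ (p ^ m) = x ^ (p ^ m) - y ^ (p ^ m)"
proof -
  have "((x - y) + y) ^ (p ^ m) = (x - y) ^ (p ^ m) + y ^ (p ^ m)" by (rule frob_add[OF assms])
  then show ?thesis by (simp add: algebra_simps)
qed

lemma frob_sum:
  fixes f :: "'b \<Rightarrow> 'a::comm_semiring_1"
  assumes "CHAR('a) = p" "prime p"
  shows "(sum f A) ^ (p ^ m) = (\<Sum>i\<in>A. f i ^ (p ^ m))"
  using freshmans_dream_sum'[of "p^m" m f A] assms by simp

lemma frob_inj:
  fixes x y :: "'a::idom"
  assumes "CHAR('a) = p" "prime p" "x ^ (p ^ m) = y ^ (p ^ m)"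
  shows "x = y"
proof -
  have "(x - y) ^ (p ^ m) = 0" using frob_diff[OF assms(1,2)] assms(3) by simp
  then show ?thesis by simp
qed



lemma pow_inj: "(p::nat) > 1 \<Longrightarrow> p ^ i = p ^ j \<longleftrightarrow> i = j"
  by (simp add: power_inject_exp)

lemma coeff_add_poly_gen:
  "coeff (add_poly p a s) m = (\<Sum>j\<le>s. if m = p ^ j then a j else 0)"
  unfolding add_poly_def by (auto simp: coeff_sum coeff_monom intro!: sum.cong)

lemma coeff_add_poly_pow:
  assumes "p > 1"
  shows "coeff (add_poly p a s) (p ^ j) = (if j \<le> s then a j else 0)"
proof -
  have "(\<Sum>i\<le>s. if p ^ j = p ^ i then a i else 0) = (\<Sum>i\<le>s. if i = j then a i else 0)"
    using assms by (intro sum.cong) (auto simp: pow_inj)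
  then show ?thesis by (simp add: coeff_add_poly_gen)
qed

lemma coeff_add_poly_notpow:
  assumes "\<And>j. m \<noteq> p ^ j"
  shows "coeff (add_poly p a s) m = 0"
  using assms by (simp add: coeff_add_poly_gen)

lemma degree_add_poly: "degree (add_poly p a s) \<le> p ^ s" if "p > 0"
  unfolding add_poly_def
proof (rule degree_sum_le[THEN order_trans])
  show "Max (insert 0 ((\<lambda>i. degree (monom (a i) (p ^ i))) ` {..s})) \<le> p ^ s"
    using that by (auto intro!: Max.boundedI simp: degree_monom_le[THEN order_trans] power_increasing)
qed auto

lemma poly_add_poly: "poly (add_poly p a s) y = (\<Sum>j\<le>s. a j * y ^ (p ^ j))"
  unfolding add_poly_def by (simp add: poly_sum poly_monom)

lemma const_poly_power': "[:c:] ^ n = [:c ^ n:]" for c :: "'a::comm_semiring_1"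
  by (induct n) (auto simp: one_pCons mult.commute)

lemma const_poly_sum': "(\<Sum>i\<in>A. [:f i:]) = [:sum f A:]"
  by (induct A rule: infinite_finite_induct) auto

lemma pcompose_monom': "pcompose (monom c n) q = smult c (q ^ n)"
  by (induct n) (auto simp: monom_0 monom_Suc pcompose_pCons)

lemma pcompose_add_poly:
  fixes y :: "'k::field"
  assumes "CHAR('k) = p" "prime p"
  shows "pcompose (add_poly p a s) [:y, 1:] = add_poly p a s + [:poly (add_poly p a s) y:]"
proof -
  have ch: "CHAR('k poly) = p" using assms by simp
  have X: "[:y, 1:] = monom 1 1 + [:y:]" by (simp add: monom_Suc monom_0 one_pCons)
  have m: "pcompose (monom c (p ^ j)) [:y, 1:] = monom c (p ^ j) + [:c * y ^ (p ^ j):]" for c j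
  proof -
    have "pcompose (monom c (p ^ j)) [:y, 1:] = smult c ([:y, 1:] ^ (p ^ j))"
      by (simp add: pcompose_monom')
    also have "[:y, 1:] ^ (p ^ j) = monom 1 1 ^ (p ^ j) + [:y:] ^ (p ^ j)"
      unfolding X by (rule frob_add[OF ch assms(2)])
    also have "\<dots> = monom 1 (p ^ j) + [:y ^ (p ^ j):]"
      by (simp add: monom_power const_poly_power')
    finally show ?thesis by (simp add: smult_monom smult_add_right)
  qed
  show ?thesis
    unfolding add_poly_def poly_add_poly[unfolded add_poly_def]
    by (simp add: pcompose_sum m sum.distrib const_poly_sum')
qed



lemma pow_p_expand:
  fixes P :: "'k::field poly"
  assumes "CHAR('k) = p" "prime p"
  shows "P ^ p = (\<Sum>k\<le>degree P. monom (coeff P k ^ p) (k * p))"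
proof -
  have ch: "CHAR('k poly) = p" using assms by simp
  have "P ^ p = (\<Sum>k\<le>degree P. monom (coeff P k) k) ^ (p ^ 1)"
    by (simp add: poly_as_sum_of_monoms)
  also have "\<dots> = (\<Sum>k\<le>degree P. monom (coeff P k) k ^ (p ^ 1))"
    by (rule frob_sum[OF ch assms(2)])
  finally show ?thesis by (simp add: monom_power)
qed

lemma coeff_pow_p_mult:
  fixes P :: "'k::field poly"
  assumes "CHAR('k) = p" "prime p"
  shows "coeff (P ^ p) (p * k) = coeff P k ^ p"
proof -
  have pp: "p > 0" using assms prime_gt_0_nat by blast
  have "coeff (P ^ p) (p * k) = (\<Sum>i\<le>degree P. if p * k = i * p then coeff P i ^ p else 0)"
    unfolding pow_p_expand[OF assms] by (auto simp: coeff_sum coeff_monom intro!: sum.cong)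
  also have "\<dots> = (\<Sum>i\<le>degree P. if i = k then coeff P i ^ p else 0)"
    using pp by (intro sum.cong) auto
  also have "\<dots> = coeff P k ^ p"
    using pp by (auto simp: coeff_eq_0 zero_power)
  finally show ?thesis .
qed

lemma coeff_pow_p_ndvd:
  fixes P :: "'k::field poly"
  assumes "CHAR('k) = p" "prime p" "\<not> p dvd m"
  shows "coeff (P ^ p) m = 0"
proof -
  have "coeff (P ^ p) m = (\<Sum>i\<le>degree P. if m = i * p then coeff P i ^ p else 0)"
    unfolding pow_p_expand[OF assms(1,2)] by (auto simp: coeff_sum coeff_monom intro!: sum.cong)
  also have "\<dots> = 0" using assms(3) by (intro sum.neutral) auto
  finally show ?thesis .
qed

lemma frob_neg:
  fixes x :: "'a::comm_ring_1"
  assumes "CHAR('a) = p" "prime p"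
  shows "(- x) ^ (p ^ m) = - (x ^ (p ^ m))"
proof -
  have "(0 - x) ^ (p ^ m) = 0 ^ (p ^ m) - x ^ (p ^ m)" by (rule frob_diff[OF assms])
  moreover have "(0::'a) ^ (p ^ m) = 0" using prime_gt_0_nat[OF assms(2)] by (simp add: zero_power)
  ultimately show ?thesis by simp
qed

lemma telescope: "(\<Sum>j\<le>(m::nat). (if j = 0 then 0 else W (j - 1)) - W j) = - (W m :: 'a::ab_group_add)"
  by (induct m) auto

definition tau :: "nat \<Rightarrow> nat \<Rightarrow> 'k::field poly \<Rightarrow> 'k" where
  "tau p s h = (\<Sum>j\<le>s. coeff h (p ^ j) ^ (p ^ (s - j)))"

lemma wp_coeff_1:
  fixes P :: "'k::field poly"
  assumes ch: "CHAR('k) = p" and pr: "prime p"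
  shows "coeff (wp p P) 1 = - coeff P 1"
proof -
  have "\<not> p dvd 1" using pr by auto
  then have "coeff (P ^ p) 1 = 0" using coeff_pow_p_ndvd[OF ch pr] by blast
  then show ?thesis by (simp add: wp_def)
qed

lemma wp_coeff_Suc:
  fixes P :: "'k::field poly"
  assumes ch: "CHAR('k) = p" and pr: "prime p"
  shows "coeff (wp p P) (p ^ Suc i) = coeff P (p ^ i) ^ p - coeff P (p ^ Suc i)"
  using coeff_pow_p_mult[OF ch pr, of P "p ^ i"] by (simp add: wp_def)

lemma tau_wp:
  fixes P :: "'k::field poly"
  assumes ch: "CHAR('k) = p" and pr: "prime p"
  shows "tau p s (wp p P) = - coeff P (p ^ s)"
proof -
  define W where "W j = coeff P (p ^ j) ^ (p ^ (s - j))" for j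
  have h0: "coeff (wp p P) (p ^ 0) ^ (p ^ (s - 0)) = (if 0 = (0::nat) then 0 else W (0 - 1)) - W 0"
  proof -
    have e: "coeff (wp p P) (p ^ 0) = - coeff P (p ^ 0)" using wp_coeff_1[OF ch pr, of P] by simp
    have e2: "coeff (wp p P) (p ^ 0) ^ (p ^ (s - 0)) = - W 0"
      unfolding e W_def using frob_neg[OF ch pr, of "coeff P (p ^ 0)" "s - 0"] by (simp only:)
    have e3: "- W 0 = (if 0 = (0::nat) then 0 else W (0 - 1)) - W 0" by (simp only: if_True diff_0 refl)
    show ?thesis using e2 e3 by (rule trans)
  qed
  have hS: "coeff (wp p P) (p ^ Suc i) ^ (p ^ (s - Suc i)) = (if Suc i = 0 then 0 else W (Suc i - 1)) - W (Suc i)"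
    if "Suc i \<le> s" for i
  proof -
    have "s - i = Suc (s - Suc i)" using that by arith
    then have ex: "p * p ^ (s - Suc i) = p ^ (s - i)" by simp
    have "(coeff P (p ^ i) ^ p) ^ (p ^ (s - Suc i)) = W i"
      unfolding W_def power_mult[symmetric] ex ..
    moreover have "coeff (wp p P) (p ^ Suc i) ^ (p ^ (s - Suc i)) = (coeff P (p ^ i) ^ p) ^ (p ^ (s - Suc i)) - coeff P (p ^ Suc i) ^ (p ^ (s - Suc i))"
      unfolding wp_coeff_Suc[OF ch pr] by (rule frob_diff[OF ch pr])
    moreover have "W (Suc i) = coeff P (p ^ Suc i) ^ (p ^ (s - Suc i))" by (simp only: W_def)
    ultimately show ?thesis by simp
  qed
  have hterm: "coeff (wp p P) (p ^ j) ^ (p ^ (s - j)) = (if j = 0 then 0 else W (j - 1)) - W j"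
    if "j \<le> s" for j
    using that h0 hS by (cases j) auto
  have "tau p s (wp p P) = (\<Sum>j\<le>s. (if j = 0 then 0 else W (j - 1)) - W j)"
    unfolding tau_def by (intro sum.cong) (auto simp: hterm)
  also have "\<dots> = - W s" by (rule telescope)
  finally show ?thesis by (simp add: W_def)
qed



lemma h_formula:
  fixes y c :: "'k::field" and S :: "'k poly"
  assumes "pcompose S [:y, 1:] = S + [:poly S y:]"
  shows "pcompose ([:0, 1:] * S + [:0, c:]) [:y, 1:] - ([:0, 1:] * S + [:0, c:])
       = smult y S + [:0, poly S y:] + [:y * poly S y + c * y:]"
proof -
  have X: "[:y, 1:] = [:0, 1:] + [:y:]" by simp
  have c: "pcompose [:0, c:] [:y, 1:] = smult c [:y, 1:]"
    by (simp add: pcompose_pCons)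
  have "pcompose ([:0, 1:] * S + [:0, c:]) [:y, 1:] = [:y, 1:] * (S + [:poly S y:]) + smult c [:y, 1:]"
    by (simp add: pcompose_add pcompose_mult assms c pcompose_pCons) (rule poly_eqI, simp add: coeff_pCons algebra_simps split: nat.split)
  also have "\<dots> = [:0, 1:] * S + [:0, 1:] * [:poly S y:] + [:y:] * S + [:y:] * [:poly S y:] + smult c [:0,1:] + smult c [:y:]"
    unfolding X by (simp add: algebra_simps)
  finally show ?thesis
    by (intro poly_eqI) (simp add: coeff_pCons algebra_simps split: nat.split)
qed



lemma degree_wp_lt:
  fixes P :: "'k::field poly"
  assumes pr: "prime p" and s1: "s \<ge> 1" and d: "degree (wp p P) \<le> p ^ s"
  shows "degree P < p ^ s"
proof (cases "degree P = 0")
  case True then show ?thesis using pr prime_gt_0_nat by simp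
next
  case False
  have p1: "p > 1" using pr prime_gt_1_nat by blast
  have P0: "P \<noteq> 0" using False by auto
  have dp: "degree (P ^ p) = p * degree P" using P0 by (simp add: degree_power_eq)
  have "degree P < degree (P ^ p)" using dp False p1 by simp
  then have "degree (wp p P) = p * degree P" unfolding wp_def diff_conv_add_uminus using dp by (subst degree_add_eq_left) auto
  then have "p * degree P \<le> p * p ^ (s - 1)" using d s1
    by (metis Suc_diff_le diff_Suc_1 power_Suc)
  then have "degree P \<le> p ^ (s - 1)" using p1 by simp
  also have "\<dots> < p ^ s" using p1 s1 by (simp add: power_strict_increasing)
  finally show ?thesis .
qed

lemma poly_Ad: "poly (Ad p a s) y = (1 / a s) *
   (\<Sum>j\<le>s. a j ^ (p ^ s) * y ^ (p ^ (s + j)) + a j ^ (p ^ (s - j)) * y ^ (p ^ (s - j)))"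
  unfolding Ad_def by (simp add: poly_sum poly_monom)

lemma transl_root:
  fixes y c :: "'k::field" and a :: "nat \<Rightarrow> 'k"
  assumes ch: "CHAR('k) = p" and pr: "prime p" and s1: "s \<ge> 1" and as: "a s \<noteq> 0"
    and ex: "\<exists>P. pcompose ([:0, 1:] * add_poly p a s + [:0, c:]) [:y, 1:] - ([:0, 1:] * add_poly p a s + [:0, c:]) = wp p P"
  shows "poly (Ad p a s) y = 0"
proof -
  have p1: "p > 1" using pr prime_gt_1_nat by blast
  define S where "S = add_poly p a s"
  obtain P where P: "smult y S + [:0, poly S y:] + [:y * poly S y + c * y:] = wp p P"
    using ex h_formula[OF pcompose_add_poly[OF ch pr]] unfolding S_def by metis
  have degS: "degree S \<le> p ^ s" unfolding S_def using degree_add_poly[of p a s] p1 by simp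
  have "degree (smult y S + [:0, poly S y:] + [:y * poly S y + c * y:]) \<le> p ^ s"
  proof -
    have "degree [:0, poly S y:] \<le> 1" by simp
    also have "1 \<le> p ^ s" using p1 by simp
    finally have "degree [:0, poly S y:] \<le> p ^ s" .
    then show ?thesis using degS
      by (intro degree_add_le degree_smult_le[THEN le_trans]) auto
  qed
  then have "degree P < p ^ s" using degree_wp_lt[OF pr s1] P by simp
  then have cP: "coeff P (p ^ s) = 0" by (simp add: coeff_eq_0)
  have cj: "coeff (smult y S + [:0, poly S y:] + [:y * poly S y + c * y:]) (p ^ j)
     = y * a j + (if j = 0 then poly S y else 0)" if "j \<le> s" for j
  proof -
    have "p ^ j \<noteq> 0" using p1 by simp
    moreover have "p ^ j = 1 \<longleftrightarrow> j = 0" using p1 by simp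
    have cS: "coeff S (p ^ j) = a j" unfolding S_def using p1 that by (simp add: coeff_add_poly_pow)
    obtain k where k: "p ^ j = Suc k" using \<open>p ^ j \<noteq> 0\<close> not0_implies_Suc by blast
    have c2: "coeff [:0, poly S y:] (p ^ j) = (if j = 0 then poly S y else 0)"
      unfolding k using \<open>p ^ j = 1 \<longleftrightarrow> j = 0\<close> k by (cases k) auto
    have c3: "coeff [:y * poly S y + c * y:] (p ^ j) = 0" unfolding k by simp
    show ?thesis by (simp add: cS c2 c3)
  qed
  have "tau p s (wp p P) = 0" using tau_wp[OF ch pr] cP by simp
  then have "0 = (\<Sum>j\<le>s. (y * a j + (if j = 0 then poly S y else 0)) ^ (p ^ (s - j)))"
    unfolding tau_def P[symmetric] by (metis (no_types, lifting) atMost_iff cj sum.cong)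
  also have "\<dots> = (\<Sum>j\<le>s. (y * a j) ^ (p ^ (s - j))) + (\<Sum>j\<le>s. (if j = 0 then poly S y else 0) ^ (p ^ (s - j)))"
    by (simp add: frob_add[OF ch pr] sum.distrib)
  also have "(\<Sum>j\<le>s. (if j = 0 then poly S y else 0) ^ (p ^ (s - j))) = poly S y ^ (p ^ s)"
  proof -
    have "(\<Sum>j\<le>s. (if j = 0 then poly S y else 0) ^ (p ^ (s - j))) = (\<Sum>j\<le>s. if j = 0 then poly S y ^ (p ^ s) else 0)"
      using p1 by (intro sum.cong) (auto simp: zero_power)
    then show ?thesis by simp
  qed
  also have "poly S y ^ (p ^ s) = (\<Sum>j\<le>s. a j ^ (p ^ s) * y ^ (p ^ (s + j)))"
    unfolding S_def poly_add_poly frob_sum[OF ch pr]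
  proof (intro sum.cong refl)
    fix j
    have "(y ^ (p ^ j)) ^ (p ^ s) = y ^ (p ^ (s + j))"
      by (simp only: power_mult[symmetric] power_add mult.commute)
    then show "(a j * y ^ p ^ j) ^ p ^ s = a j ^ p ^ s * y ^ p ^ (s + j)"
      by (simp only: power_mult_distrib)
  qed
  finally have "(\<Sum>j\<le>s. (y * a j) ^ p ^ (s - j)) + (\<Sum>j\<le>s. a j ^ (p ^ s) * y ^ (p ^ (s + j))) = 0" by simp
  moreover have "(\<Sum>j\<le>s. (y * a j) ^ p ^ (s - j)) = (\<Sum>j\<le>s. a j ^ (p ^ (s - j)) * y ^ (p ^ (s - j)))"
    by (simp only: power_mult_distrib mult.commute)
  ultimately have "(\<Sum>j\<le>s. a j ^ (p ^ s) * y ^ (p ^ (s + j)) + a j ^ (p ^ (s - j)) * y ^ (p ^ (s - j))) = 0"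
    by (simp add: sum.distrib add.commute)
  then show ?thesis by (simp add: poly_Ad)
qed



lemma coeff_Ad_gen: "coeff (Ad p a s) k = (1 / a s) *
   (\<Sum>i\<le>s. (if k = p ^ (s + i) then a i ^ (p ^ s) else 0) + (if k = p ^ (s - i) then a i ^ (p ^ (s - i)) else 0))"
  unfolding Ad_def by (auto simp: coeff_sum coeff_monom intro!: sum.cong arg_cong[where f="\<lambda>x. _ * x"])

lemma coeff_Ad_hi:
  assumes p1: "p > 1" and j: "1 \<le> j" "j \<le> s"
  shows "coeff (Ad p a s) (p ^ (s + j)) = a j ^ (p ^ s) / a s"
proof -
  have "(\<Sum>i\<le>s. (if p ^ (s + j) = p ^ (s + i) then a i ^ (p ^ s) else 0) + (if p ^ (s + j) = p ^ (s - i) then a i ^ (p ^ (s - i)) else 0))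
      = (\<Sum>i\<le>s. if i = j then a i ^ (p ^ s) else 0)"
    using p1 j by (intro sum.cong refl) (auto simp: pow_inj)
  then show ?thesis using j by (simp add: coeff_Ad_gen)
qed

lemma coeff_Ad_lo:
  assumes p1: "p > 1" and j: "1 \<le> j" "j \<le> s"
  shows "coeff (Ad p a s) (p ^ (s - j)) = a j ^ (p ^ (s - j)) / a s"
proof -
  have "(\<Sum>i\<le>s. (if p ^ (s - j) = p ^ (s + i) then a i ^ (p ^ s) else 0) + (if p ^ (s - j) = p ^ (s - i) then a i ^ (p ^ (s - i)) else 0))
      = (\<Sum>i\<le>s. if i = j then a i ^ (p ^ (s - i)) else 0)"
    using p1 j by (intro sum.cong refl) (auto simp: pow_inj)
  then show ?thesis using j by (simp add: coeff_Ad_gen)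
qed

lemma coeff_Ad_mid:
  assumes p1: "p > 1"
  shows "coeff (Ad p a s) (p ^ s) = 2 * a 0 ^ (p ^ s) / a s"
proof -
  have "(\<Sum>i\<le>s. (if p ^ s = p ^ (s + i) then a i ^ (p ^ s) else 0) + (if p ^ s = p ^ (s - i) then a i ^ (p ^ (s - i)) else 0))
      = (\<Sum>i\<le>s. if i = 0 then 2 * a i ^ (p ^ s) else 0)"
    using p1 by (intro sum.cong refl) (auto simp: pow_inj)
  then show ?thesis by (simp add: coeff_Ad_gen)
qed

lemma degree_Ad:
  assumes p1: "p > 1"
  shows "degree (Ad p a s) \<le> p ^ (s + s)"
proof -
  have "coeff (Ad p a s) k = 0" if "k > p ^ (s + s)" for k
  proof -
    have lt: "p ^ (s + i) < k" "p ^ (s - i) < k" if "i \<le> s" for i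
      using that \<open>k > p ^ (s + s)\<close> p1
      by (meson add_le_mono1 diff_le_self le_add1 le_less_trans order.trans power_increasing less_imp_le_nat
          add_le_mono le_refl)+
    have "(\<Sum>i\<le>s. (if k = p ^ (s + i) then a i ^ (p ^ s) else 0) + (if k = p ^ (s - i) then a i ^ (p ^ (s - i)) else 0)) = 0"
      by (rule sum.neutral) (use lt in fastforce)
    then show ?thesis by (simp add: coeff_Ad_gen)
  qed
  then show ?thesis by (meson degree_le not_le)
qed



lemma degree_wp:
  fixes P :: "'k::field poly"
  assumes pr: "prime p" and "degree P \<noteq> 0"
  shows "degree (wp p P) = p * degree P"
proof -
  have p1: "p > 1" using pr prime_gt_1_nat by blast
  have P0: "P \<noteq> 0" using assms by auto
  have dp: "degree (P ^ p) = p * degree P" using P0 by (simp add: degree_power_eq)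
  have "degree P < degree (P ^ p)" using dp assms p1 by simp
  then show ?thesis unfolding wp_def diff_conv_add_uminus using dp by (subst degree_add_eq_left) auto
qed

lemma wp_0: "prime p \<Longrightarrow> wp p (0::'k::field poly) = 0"
  unfolding wp_def using prime_gt_0_nat by (simp add: zero_power)

lemma deg_cls_le:
  fixes g :: "'k::field poly"
  assumes "prime p"
  shows "deg_cls p g \<le> degree g"
  unfolding deg_cls_def
  by (rule Least_le, rule exI[of _ 0]) (simp add: wp_0[OF assms])

lemma degree_ge_reduced:
  fixes g P :: "'k::field poly"
  assumes pr: "prime p" and red: "reduced p g" and cD: "coeff g D \<noteq> 0"
  shows "D \<le> degree (g + wp p P)"
proof (rule ccontr)
  assume "\<not> D \<le> degree (g + wp p P)"
  then have "coeff (g + wp p P) D = 0" by (intro coeff_eq_0) simp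
  then have cw: "coeff (wp p P) D \<noteq> 0" using cD by (simp add: add_eq_0_iff)
  have nd: "\<not> p dvd D" using red cD unfolding reduced_def by blast
  have D0: "D \<noteq> 0" using nd by (metis dvd_0_right)
  show False
  proof (cases "degree P = 0")
    case True
    then obtain b where "P = [:b:]" by (metis degree_eq_zeroE)
    then have "wp p P = [:b ^ p - b:]" unfolding wp_def by (simp add: const_poly_power')
    then show False using cw D0 by (simp add: coeff_pCons split: nat.splits)
  next
    case False
    have dw: "degree (wp p P) = p * degree P" using degree_wp[OF pr False] .
    have "D \<le> p * degree P" using cw dw le_degree by fastforce
    moreover have "D \<noteq> p * degree P" using nd by auto
    ultimately have lt: "D < p * degree P" by simp
    have w0: "wp p P \<noteq> 0" using cw by auto
    have "coeff g (p * degree P) = 0" using red unfolding reduced_def by simp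
    then have "coeff (g + wp p P) (p * degree P) = lead_coeff (wp p P)" using dw by simp
    then have "coeff (g + wp p P) (p * degree P) \<noteq> 0" using w0 by simp
    then have "p * degree P \<le> degree (g + wp p P)" by (rule le_degree)
    then show False using lt \<open>\<not> D \<le> degree (g + wp p P)\<close> by simp
  qed
qed

lemma deg_cls_ge:
  fixes g :: "'k::field poly"
  assumes pr: "prime p" and red: "reduced p g" and cD: "coeff g D \<noteq> 0"
  shows "D \<le> deg_cls p g"
proof -
  have ex: "\<exists>d P. degree (g + wp p P) = d" by blast
  obtain P where "degree (g + wp p P) = deg_cls p g"
    unfolding deg_cls_def using LeastI_ex[OF ex] by blast
  then show ?thesis using degree_ge_reduced[OF pr red cD, of P] by simp
qed



lemma frob_iter:
  fixes x :: "'k::field"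
  assumes "x ^ (p ^ a) = x"
  shows "x ^ (p ^ (a * u)) = x"
proof (induct u)
  case 0 then show ?case by simp
next
  case (Suc u)
  have "x ^ (p ^ (a * Suc u)) = (x ^ (p ^ (a * u))) ^ (p ^ a)"
    by (simp add: power_mult[symmetric] power_add[symmetric] algebra_simps)
  then show ?case using Suc assms by simp
qed

lemma frob_gcd:
  fixes x :: "'k::field"
  assumes a: "x ^ (p ^ a) = x" and b: "x ^ (p ^ b) = x"
  shows "x ^ (p ^ (gcd a b)) = x"
proof (cases "a = 0")
  case True then show ?thesis using b by simp
next
  case False
  obtain u w where uw: "a * u = b * w + gcd a b" using bezout_nat[OF False] by blast
  have "x = x ^ (p ^ (a * u))" using frob_iter[OF a] by simp
  also have "\<dots> = (x ^ (p ^ (b * w))) ^ (p ^ gcd a b)"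
    unfolding uw by (simp add: power_mult[symmetric] power_add)
  also have "\<dots> = x ^ (p ^ gcd a b)" using frob_iter[OF b] by simp
  finally show ?thesis by simp
qed

lemma frob_Gcd:
  fixes x :: "'k::field"
  assumes "finite A" "\<And>m. m \<in> A \<Longrightarrow> x ^ (p ^ m) = x"
  shows "x ^ (p ^ (Gcd A)) = x"
  using assms
proof (induct A rule: finite_induct)
  case empty then show ?case by simp
next
  case (insert m A)
  then show ?case by (simp add: frob_gcd)
qed

lemma of_nat_frob:
  assumes ch: "CHAR('k::field) = p" and pr: "prime p"
  shows "(of_nat m :: 'k) ^ p = of_nat m"
proof (induct m)
  case 0 then show ?case using pr prime_gt_0_nat by (simp add: zero_power)
next
  case (Suc m)
  have "(of_nat m + 1 :: 'k) ^ (p ^ 1) = of_nat m ^ (p ^ 1) + 1 ^ (p ^ 1)" by (rule frob_add[OF ch pr])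
  then show ?case using Suc by (simp add: add.commute)
qed

lemma prime_field_elem:
  fixes x :: "'k::field"
  assumes ch: "CHAR('k) = p" and pr: "prime p" and x: "x ^ p = x"
  shows "\<exists>m<p. x = of_nat m"
proof -
  have p1: "p > 1" using pr prime_gt_1_nat by blast
  define q :: "'k poly" where "q = monom 1 p - monom 1 1"
  have dq: "degree q = p" unfolding q_def using p1 unfolding diff_conv_add_uminus by (subst degree_add_eq_left) (auto simp: degree_monom_eq)
  have q0: "q \<noteq> 0" using dq p1 by auto
  have roots: "{y. poly q y = 0} = {y. y ^ p = y}" unfolding q_def by (auto simp: poly_monom)
  have inj: "inj_on (of_nat :: nat \<Rightarrow> 'k) {..<p}"
  proof (rule inj_onI)
    fix u w assume u: "u \<in> {..<p}" and w: "w \<in> {..<p}" and e: "(of_nat u :: 'k) = of_nat w"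
    show "u = w"
    proof (rule ccontr)
      assume "u \<noteq> w"
      then consider "u < w" | "w < u" by linarith
      then show False
      proof cases
        case 1
        then have "(of_nat (w - u) :: 'k) = 0" using e by (simp add: of_nat_diff)
        then have "p dvd (w - u)" using ch of_nat_eq_0_iff_char_dvd by metis
        then show False using 1 w by (simp add: nat_dvd_not_less)
      next
        case 2
        then have "(of_nat (u - w) :: 'k) = 0" using e by (simp add: of_nat_diff)
        then have "p dvd (u - w)" using ch of_nat_eq_0_iff_char_dvd by metis
        then show False using 2 u by (simp add: nat_dvd_not_less)
      qed
    qed
  qed
  have T: "of_nat ` {..<p} \<subseteq> {y :: 'k. poly q y = 0}"
    unfolding roots using of_nat_frob[OF ch pr] by auto
  have cT: "card (of_nat ` {..<p} :: 'k set) = p" using card_image[OF inj] by simp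
  have "card {y :: 'k. poly q y = 0} \<le> p" using card_poly_roots_bound[OF q0] dq by simp
  then have "of_nat ` {..<p} = {y :: 'k. poly q y = 0}"
    using T cT poly_roots_finite[OF q0] card_mono[OF poly_roots_finite[OF q0] T]
    by (intro card_subset_eq) auto
  moreover have "x \<in> {y. poly q y = 0}" unfolding roots using x by simp
  ultimately show ?thesis by auto
qed



lemma poly_eq_from_roots:
  fixes A B :: "'k::field poly"
  assumes dA: "degree A \<le> D" and dB: "degree B \<le> D"
    and VA: "V \<subseteq> {x. poly A x = 0}" and VB: "V \<subseteq> {x. poly B x = 0}"
    and fV: "finite V" and cV: "card V = D"
    and A1: "coeff A 1 = 1" and B1: "coeff B 1 = 1" and AD: "coeff A D \<noteq> 0"
  shows "A = B"
proof -
  define Q where "Q = smult (coeff A D) B - smult (coeff B D) A"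
  have cQ: "coeff Q D = 0" unfolding Q_def by (simp add: mult.commute)
  have dQ: "degree Q \<le> D" unfolding Q_def using dA dB
    by (intro degree_diff_le degree_smult_le[THEN le_trans]) auto
  have VQ: "V \<subseteq> {x. poly Q x = 0}"
  proof
    fix x assume "x \<in> V"
    then have "poly A x = 0" "poly B x = 0" using VA VB by auto
    then show "x \<in> {x. poly Q x = 0}" by (simp add: Q_def)
  qed
  have Q0: "Q = 0"
  proof (rule ccontr)
    assume Q0: "Q \<noteq> 0"
    have "degree Q \<noteq> D" using cQ Q0 by (metis leading_coeff_0_iff)
    then have "degree Q < D" using dQ by simp
    moreover have "card V \<le> degree Q"
      using card_mono[OF poly_roots_finite[OF Q0] VQ] card_poly_roots_bound[OF Q0] by simp
    ultimately show False using cV by simp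
  qed
  then have "coeff Q 1 = 0" by simp
  then have e: "coeff B D = coeff A D" unfolding Q_def using A1 B1 by simp
  have "smult (coeff A D) (B - A) = 0" using Q0 unfolding Q_def e by (simp add: smult_diff_right)
  then show ?thesis using AD by simp
qed

lemma coeff_compare:
  fixes a b :: "nat \<Rightarrow> 'k::field"
  assumes ch: "CHAR('k) = p" and pr: "prime p" and s1: "s \<ge> 1"
    and as: "a s \<noteq> 0" and bs: "b s \<noteq> 0"
    and eq: "Ad p a s = Ad p b s"
    and p2: "p = 2 \<Longrightarrow> a 0 = 0 \<and> b 0 = 0"
  defines "\<gamma> \<equiv> a s / b s"
  shows "\<gamma> ^ (p ^ s) = \<gamma>"
    and "\<And>j. j \<le> s \<Longrightarrow> a j = \<gamma> * b j"
    and "\<And>j. j \<le> s \<Longrightarrow> b j \<noteq> 0 \<Longrightarrow> \<gamma> ^ (p ^ (s - j)) = \<gamma>"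
proof -
  have p1: "p > 1" using pr prime_gt_1_nat by blast
  have hi: "a j ^ (p ^ s) / a s = b j ^ (p ^ s) / b s" if "1 \<le> j" "j \<le> s" for j
    using coeff_Ad_hi[OF p1 that, of a] coeff_Ad_hi[OF p1 that, of b] eq by simp
  have lo: "a j ^ (p ^ (s - j)) / a s = b j ^ (p ^ (s - j)) / b s" if "1 \<le> j" "j \<le> s" for j
    using coeff_Ad_lo[OF p1 that, of a] coeff_Ad_lo[OF p1 that, of b] eq by simp
  have mid: "2 * a 0 ^ (p ^ s) / a s = 2 * b 0 ^ (p ^ s) / b s"
    using coeff_Ad_mid[OF p1, of a s] coeff_Ad_mid[OF p1, of b s] eq by simp
  show g: "\<gamma> ^ (p ^ s) = \<gamma>"
  proof -
    have "a s ^ (p ^ s) * b s = b s ^ (p ^ s) * a s" using hi[OF s1 order.refl] as bs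
      by (simp add: field_simps)
    then show ?thesis unfolding \<gamma>_def using as bs by (simp add: power_divide field_simps)
  qed
  have key: "a j = \<gamma> * b j" if "a j ^ (p ^ s) / a s = b j ^ (p ^ s) / b s" for j
  proof -
    have "a j ^ (p ^ s) = \<gamma> * b j ^ (p ^ s)" using that as bs unfolding \<gamma>_def by (simp add: field_simps)
    also have "\<dots> = (\<gamma> * b j) ^ (p ^ s)" using g by (simp add: power_mult_distrib)
    finally show ?thesis by (rule frob_inj[OF ch pr])
  qed
  show aj: "a j = \<gamma> * b j" if "j \<le> s" for j
  proof (cases "j = 0")
    case False then show ?thesis using key hi that by simp
  next
    case True
    show ?thesis
    proof (cases "p = 2")
      case True then show ?thesis using p2 \<open>j = 0\<close> by simp
    next
      case False
      have "\<not> p dvd 2" using p1 False dvd_imp_le[of p 2] by auto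
      then have "(2::'k) \<noteq> 0" using ch of_nat_eq_0_iff_char_dvd[where 'a='k, of 2] by simp
      moreover have "2 * (a 0 ^ (p ^ s) / a s) = 2 * (b 0 ^ (p ^ s) / b s)" using mid by (simp only: times_divide_eq_right)
      ultimately have "a 0 ^ (p ^ s) / a s = b 0 ^ (p ^ s) / b s" using mult_left_cancel by blast
      then show ?thesis using key True by simp
    qed
  qed
  show "\<gamma> ^ (p ^ (s - j)) = \<gamma>" if "j \<le> s" "b j \<noteq> 0" for j
  proof (cases "j = 0")
    case True then show ?thesis using g by simp
  next
    case False
    then have "(\<gamma> * b j) ^ (p ^ (s - j)) / a s = b j ^ (p ^ (s - j)) / b s"
      using lo[of j] that aj[OF that(1)] by simp
    then have "\<gamma> ^ (p ^ (s - j)) * b j ^ (p ^ (s - j)) = (a s / b s) * b j ^ (p ^ (s - j))"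
      using as bs by (simp add: power_mult_distrib field_simps)
    moreover have "b j ^ (p ^ (s - j)) \<noteq> 0" using that(2) by simp
    ultimately have "\<gamma> ^ (p ^ (s - j)) = a s / b s" using mult_right_cancel by blast
    then show ?thesis unfolding \<gamma>_def .
  qed
qed

lemma f_facts:
  fixes a :: "nat \<Rightarrow> 'k::field" and c :: 'k
  assumes p1: "p > 1" and s1: "s \<ge> 1"
  defines "f \<equiv> [:0, 1:] * add_poly p a s + [:0, c:]"
  shows "coeff f (p ^ s + 1) = a s" and "degree f \<le> p ^ s + 1" and "coeff f 2 = a 0"
proof -
  have ps: "p ^ s \<ge> 2" using power_increasing[of 1 s p] p1 s1 by simp
  show "coeff f (p ^ s + 1) = a s" unfolding f_def using ps p1
    by (auto simp: coeff_add_poly_pow coeff_pCons split: nat.split)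
  show "degree f \<le> p ^ s + 1" unfolding f_def using degree_add_poly[of p a s] p1 ps
    by (intro degree_add_le) (auto simp: degree_mult_le[THEN le_trans])
  have "coeff (add_poly p a s) (p ^ 0) = a 0" using coeff_add_poly_pow[OF p1, of a s 0] by simp
  then show "coeff f 2 = a 0" unfolding f_def by (simp add: numeral_2_eq_2)
qed



lemma smult_sum_right: "smult c (\<Sum>i\<in>A. f i) = (\<Sum>i\<in>A. smult c (f i))"
  by (induct A rule: infinite_finite_induct) (auto simp: smult_add_right)

theorem proposition4p2:
  fixes p n v :: nat
    and f :: "nat \<Rightarrow> 'k::field poly"
    and V :: "'k set"
    and s :: "nat \<Rightarrow> nat"
    and a :: "nat \<Rightarrow> nat \<Rightarrow> 'k"
    and c :: "nat \<Rightarrow> 'k"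
  assumes k_closed: "alg_closed TYPE('k)"
    and p_prime: "prime p"
    and char_p: "CHAR('k) = p"
    and n_ge2: "n \<ge> 2"
    \<comment> \<open>V is an F_p-subspace of k of dimension v\<close>
    and V_zero: "0 \<in> V"
    and V_add: "\<And>x y. x \<in> V \<Longrightarrow> y \<in> V \<Longrightarrow> x + y \<in> V"
    and V_fin: "finite V"
    and V_dim: "card V = p ^ v"
    \<comment> \<open>the f_i are reduced representatives of a basis with properties (a),(b),(c)\<close>
    and f_red: "\<And>i. i \<in> {1..n} \<Longrightarrow> reduced p (f i)"
    and cond_a: "\<And>i. i \<in> {1..n} \<Longrightarrow> \<not> p dvd deg_cls p (f i)"
    and cond_b: "\<And>i j. i \<in> {1..n} \<Longrightarrow> j \<in> {1..n} \<Longrightarrow> i \<le> j \<Longrightarrow>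
                   deg_cls p (f i) \<le> deg_cls p (f j)"
    and cond_c: "\<And>lam :: nat \<Rightarrow> nat. (\<forall>i\<in>{1..n}. lam i < p) \<Longrightarrow> (\<exists>i\<in>{1..n}. lam i \<noteq> 0) \<Longrightarrow>
                   deg_cls p (\<Sum>i\<in>{1..n}. smult (of_nat (lam i)) (f i)) =
                   Max ((\<lambda>i. deg_cls p (smult (of_nat (lam i)) (f i))) ` {1..n})"
    \<comment> \<open>translation invariance modulo wp(k[X])\<close>
    and transl: "\<And>i y. i \<in> {1..n} \<Longrightarrow> y \<in> V \<Longrightarrow>
                   \<exists>P. pcompose (f i) [:y, 1:] - f i = wp p P"
    \<comment> \<open>the resulting shape f_i = X S_i(X) + c_i X\<close>
    and s_ge1: "\<And>i. i \<in> {1..n} \<Longrightarrow> s i \<ge> 1"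
    and a_lead: "\<And>i. i \<in> {1..n} \<Longrightarrow> a i (s i) \<noteq> 0"
    and f_shape: "\<And>i. i \<in> {1..n} \<Longrightarrow>
                   f i = [:0, 1:] * add_poly p (a i) (s i) + [:0, c i:]"
    and v_eq: "v = 2 * s n"
  shows "(\<forall>i\<in>{1..n}. s i = s 1)
       \<and> V = {x. poly (Ad p (a 1) (s 1)) x = 0}
       \<and> (\<exists>d (\<gamma> :: nat \<Rightarrow> 'k). d > 0 \<and> d dvd s 1
            \<and> (\<forall>i\<in>{2..n}. \<gamma> i \<in> Fq (p ^ d) - Fq p)
            \<and> (\<forall>j\<le>s 1. \<not> d dvd j \<longrightarrow> a 1 j = 0)
            \<and> (\<forall>i\<in>{2..n}. add_poly p (a i) (s i) = smult (\<gamma> i) (add_poly p (a 1) (s 1)))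
            \<and> (\<forall>lam :: nat \<Rightarrow> nat. (\<forall>i\<in>{1..n}. lam i < p) \<longrightarrow>
                 of_nat (lam 1) + (\<Sum>i\<in>{2..n}. of_nat (lam i) * \<gamma> i) = (0::'k) \<longrightarrow>
                 (\<forall>i\<in>{1..n}. lam i = 0)))
       \<and> s 1 \<ge> 2"
proof -
  have ch: "CHAR('k) = p" by (rule char_p)
  have pr: "prime p" by (rule p_prime)
  have p1: "p > 1" using pr prime_gt_1_nat by blast
  have p0: "p > 0" using p1 by simp
  define S where "S i = add_poly p (a i) (s i)" for i
  have fS: "f i = [:0, 1:] * S i + [:0, c i:]" if "i \<in> {1..n}" for i
    using f_shape[OF that] unfolding S_def .
  have n1: "1 \<in> {1..n}" "n \<in> {1..n}" using n_ge2 by auto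
  have dc: "deg_cls p (f i) = p ^ s i + 1" if i: "i \<in> {1..n}" for i
  proof -
    have c1: "coeff (f i) (p ^ s i + 1) = a i (s i)" and d1: "degree (f i) \<le> p ^ s i + 1"
      using f_facts[OF p1 s_ge1[OF i], of "a i" "c i"] f_shape[OF i] by simp_all
    have "deg_cls p (f i) \<le> p ^ s i + 1" using deg_cls_le[OF pr, of "f i"] d1 by simp
    moreover have "p ^ s i + 1 \<le> deg_cls p (f i)"
      using deg_cls_ge[OF pr f_red[OF i]] c1 a_lead[OF i] by simp
    ultimately show ?thesis by simp
  qed
  have s_le: "s i \<le> s n" if i: "i \<in> {1..n}" for i
  proof -
    have "p ^ s i + 1 \<le> p ^ s n + 1" using cond_b[OF i n1(2)] i dc[OF i] dc[OF n1(2)] by simp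
    then show ?thesis using p1 by simp
  qed
  have VAd: "V \<subseteq> {x. poly (Ad p (a i) (s i)) x = 0}" if i: "i \<in> {1..n}" for i
  proof
    fix y assume y: "y \<in> V"
    show "y \<in> {x. poly (Ad p (a i) (s i)) x = 0}"
      using transl_root[where a="a i" and s="s i" and c="c i" and y=y, OF ch pr s_ge1[OF i] a_lead[OF i]] transl[OF i y] f_shape[OF i] by simp
  qed
  have Ad1: "coeff (Ad p (a i) (s i)) 1 = 1" if i: "i \<in> {1..n}" for i
    using coeff_Ad_lo[OF p1 s_ge1[OF i] order.refl, of "a i"] a_lead[OF i] by simp
  have AdD: "coeff (Ad p (a i) (s i)) (p ^ (s i + s i)) \<noteq> 0" if i: "i \<in> {1..n}" for i
    using coeff_Ad_hi[OF p1 s_ge1[OF i] order.refl, of "a i"] a_lead[OF i] by simp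
  have Ad0: "Ad p (a i) (s i) \<noteq> 0" if i: "i \<in> {1..n}" for i
    using Ad1[OF i] by auto
  have cardV: "card V \<le> p ^ (s i + s i)" if i: "i \<in> {1..n}" for i
  proof -
    have "card V \<le> card {x. poly (Ad p (a i) (s i)) x = 0}"
      using card_mono[OF poly_roots_finite[OF Ad0[OF i]] VAd[OF i]] .
    also have "\<dots> \<le> degree (Ad p (a i) (s i))" by (rule card_poly_roots_bound[OF Ad0[OF i]])
    also have "\<dots> \<le> p ^ (s i + s i)" by (rule degree_Ad[OF p1])
    finally show ?thesis .
  qed
  have s_eq: "s i = s n" if i: "i \<in> {1..n}" for i
  proof -
    have "p ^ (s n + s n) \<le> p ^ (s i + s i)" using cardV[OF i] V_dim v_eq by (simp add: mult_2)
    then have "s n + s n \<le> s i + s i" using p1 by simp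
    then show ?thesis using s_le[OF i] by simp
  qed
  define s0 where "s0 = s 1"
  have s_eq1: "s i = s0" if "i \<in> {1..n}" for i using s_eq[OF that] s_eq[OF n1(1)] s0_def by simp
  have s01: "s0 \<ge> 1" using s_ge1[OF n1(1)] s0_def by simp
  have cV: "card V = p ^ (s0 + s0)" using V_dim v_eq s_eq1[OF n1(2)] by (simp add: mult_2)
  have V1: "V = {x. poly (Ad p (a 1) (s 1)) x = 0}"
  proof (rule card_subset_eq)
    show "finite {x. poly (Ad p (a 1) (s 1)) x = 0}" by (rule poly_roots_finite[OF Ad0[OF n1(1)]])
    show "V \<subseteq> {x. poly (Ad p (a 1) (s 1)) x = 0}" by (rule VAd[OF n1(1)])
    have "card {x. poly (Ad p (a 1) (s 1)) x = 0} \<le> degree (Ad p (a 1) (s 1))"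
      by (rule card_poly_roots_bound[OF Ad0[OF n1(1)]])
    also have "\<dots> \<le> p ^ (s 1 + s 1)" by (rule degree_Ad[OF p1])
    finally show "card V = card {x. poly (Ad p (a 1) (s 1)) x = 0}"
      using cV s0_def card_mono[OF poly_roots_finite[OF Ad0[OF n1(1)]] VAd[OF n1(1)]] by simp
  qed
  have AdEq: "Ad p (a i) s0 = Ad p (a 1) s0" if i: "i \<in> {1..n}" for i
  proof -
    have e: "s i = s0" "s 1 = s0" using s_eq1[OF i] s_eq1[OF n1(1)] by auto
    show ?thesis
      by (rule poly_eq_from_roots[OF degree_Ad[OF p1] degree_Ad[OF p1] _ _ V_fin cV])
        (use VAd[OF i] VAd[OF n1(1)] Ad1[OF i] Ad1[OF n1(1)] AdD[OF i] e in auto)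
  qed
  have a0: "p = 2 \<Longrightarrow> a i 0 = 0" if i: "i \<in> {1..n}" for i
  proof -
    assume "p = 2"
    then have "coeff (f i) 2 = 0" using f_red[OF i] unfolding reduced_def by simp
    then show "a i 0 = 0" using f_facts(3)[OF p1 s_ge1[OF i], of "a i" "c i"] f_shape[OF i] by simp
  qed
  define \<gamma> where "\<gamma> i = a i s0 / a 1 s0" for i
  have a1s: "a 1 s0 \<noteq> 0" using a_lead[OF n1(1)] s0_def by simp
  have ais: "a i s0 \<noteq> 0" if "i \<in> {1..n}" for i using a_lead[OF that] s_eq1[OF that] by simp
  have cc: "\<gamma> i ^ (p ^ s0) = \<gamma> i"
      "\<And>j. j \<le> s0 \<Longrightarrow> a i j = \<gamma> i * a 1 j"
      "\<And>j. j \<le> s0 \<Longrightarrow> a 1 j \<noteq> 0 \<Longrightarrow> \<gamma> i ^ (p ^ (s0 - j)) = \<gamma> i" if i: "i \<in> {1..n}" for i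
    using coeff_compare[OF ch pr s01 ais[OF i] a1s AdEq[OF i]] a0[OF i] a0[OF n1(1)]
    unfolding \<gamma>_def by blast+
  have g1: "\<gamma> 1 = 1" unfolding \<gamma>_def using a1s by simp
  have Sg: "S i = smult (\<gamma> i) (S 1)" if i: "i \<in> {1..n}" for i
    unfolding S_def add_poly_def s_eq1[OF i] s_eq1[OF n1(1)]
    by (simp add: smult_sum_right smult_monom cc(2)[OF i])
  define E where "E = insert s0 ((\<lambda>j. s0 - j) ` {j. j \<le> s0 \<and> a 1 j \<noteq> 0})"
  define d where "d = Gcd E"
  have fE: "finite E" unfolding E_def by simp
  have ds: "d dvd s0" unfolding d_def E_def by (simp add: Gcd_dvd)
  have dpos: "d > 0" using ds s01 by (metis dvd_0_left_iff gr0I not_one_le_zero)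
  have gd: "\<gamma> i ^ (p ^ d) = \<gamma> i" if i: "i \<in> {1..n}" for i
    unfolding d_def by (rule frob_Gcd[OF fE]) (auto simp: E_def cc[OF i])
  have ad: "\<forall>j\<le>s0. \<not> d dvd j \<longrightarrow> a 1 j = 0"
  proof (intro allI impI)
    fix j assume j: "j \<le> s0" and nd: "\<not> d dvd j"
    show "a 1 j = 0"
    proof (rule ccontr)
      assume "a 1 j \<noteq> 0"
      then have "s0 - j \<in> E" unfolding E_def using j by auto
      then have "d dvd s0 - j" unfolding d_def by (rule Gcd_dvd)
      then have "d dvd s0 - (s0 - j)" using ds by (simp add: dvd_diff_nat)
      then show False using nd j by simp
    qed
  qed
  have linind: "\<forall>lam :: nat \<Rightarrow> nat. (\<forall>i\<in>{1..n}. lam i < p) \<longrightarrow>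
                 of_nat (lam 1) + (\<Sum>i\<in>{2..n}. of_nat (lam i) * \<gamma> i) = (0::'k) \<longrightarrow>
                 (\<forall>i\<in>{1..n}. lam i = 0)"
  proof (intro allI impI ballI)
    fix lam :: "nat \<Rightarrow> nat" and i0
    assume lp: "\<forall>i\<in>{1..n}. lam i < p" and lz: "of_nat (lam 1) + (\<Sum>i\<in>{2..n}. of_nat (lam i) * \<gamma> i) = (0::'k)"
      and i0: "i0 \<in> {1..n}"
    show "lam i0 = 0"
    proof (rule ccontr)
      assume nz: "lam i0 \<noteq> 0"
      have sum0: "(\<Sum>i\<in>{1..n}. of_nat (lam i) * \<gamma> i) = (0::'k)"
      proof -
        have "{1..n} = insert 1 {2..n}" using n_ge2 by auto
        then show ?thesis using lz g1 by simp
      qed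
      have F: "(\<Sum>i\<in>{1..n}. smult (of_nat (lam i)) (f i)) = [:0, 1:] * [:\<Sum>i\<in>{1..n}. of_nat (lam i) * c i:]"
      proof -
        have "(\<Sum>i\<in>{1..n}. smult (of_nat (lam i)) (f i)) =
              (\<Sum>i\<in>{1..n}. [:0, 1:] * (smult (of_nat (lam i) * \<gamma> i) (S 1) + [:of_nat (lam i) * c i:]))"
        proof (rule sum.cong[OF refl])
          fix i assume i: "i \<in> {1..n}"
          show "smult (of_nat (lam i)) (f i) = [:0, 1:] * (smult (of_nat (lam i) * \<gamma> i) (S 1) + [:of_nat (lam i) * c i:])"
            unfolding fS[OF i] Sg[OF i] by (simp add: algebra_simps smult_add_right mult.commute)
        qed
        also have "\<dots> = [:0, 1:] * (smult (\<Sum>i\<in>{1..n}. of_nat (lam i) * \<gamma> i) (S 1) + [:\<Sum>i\<in>{1..n}. of_nat (lam i) * c i:])"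
          by (simp only: sum_distrib_left[symmetric] sum.distrib smult_sum[symmetric] const_poly_sum')
        finally show ?thesis using sum0 by simp
      qed
      have "deg_cls p (\<Sum>i\<in>{1..n}. smult (of_nat (lam i)) (f i)) \<le> 1"
        unfolding F using deg_cls_le[OF pr, of "[:0, 1:] * [:\<Sum>i\<in>{1..n}. of_nat (lam i) * c i:]"]
        by (simp add: degree_pCons_le le_trans)
      moreover have "deg_cls p (\<Sum>i\<in>{1..n}. smult (of_nat (lam i)) (f i)) =
          Max ((\<lambda>i. deg_cls p (smult (of_nat (lam i)) (f i))) ` {1..n})"
        by (rule cond_c) (use lp i0 nz in blast)+
      moreover have "deg_cls p (smult (of_nat (lam i0)) (f i0)) \<le> Max ((\<lambda>i. deg_cls p (smult (of_nat (lam i)) (f i))) ` {1..n})"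
        using i0 by (intro Max_ge) auto
      moreover have "p ^ s i0 + 1 \<le> deg_cls p (smult (of_nat (lam i0)) (f i0))"
      proof (rule deg_cls_ge[OF pr])
        show "reduced p (smult (of_nat (lam i0)) (f i0))"
          using f_red[OF i0] unfolding reduced_def by simp
        have "(of_nat (lam i0) :: 'k) \<noteq> 0"
        proof
          assume "(of_nat (lam i0) :: 'k) = 0"
          then have "p dvd lam i0" using ch of_nat_eq_0_iff_char_dvd by metis
          then show False using nz lp i0 by (simp add: nat_dvd_not_less)
        qed
        then show "coeff (smult (of_nat (lam i0)) (f i0)) (p ^ s i0 + 1) \<noteq> 0"
          using f_facts(1)[OF p1 s_ge1[OF i0], of "a i0" "c i0"] f_shape[OF i0] a_lead[OF i0] by simp
      qed
      moreover have "0 < p ^ s i0" using p0 by simp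
      ultimately show False by linarith
    qed
  qed
  have notFp: "\<gamma> i \<notin> Fq p" if i: "i \<in> {2..n}" for i
  proof
    assume "\<gamma> i \<in> Fq p"
    then obtain m where m: "m < p" "\<gamma> i = of_nat m"
      using prime_field_elem[OF ch pr] unfolding Fq_def by blast
    define lam where "lam j = (if j = 1 then (p - m) mod p else if j = i then 1 else 0)" for j
    have i1: "i \<noteq> 1" using i by auto
    have lp: "\<forall>j\<in>{1..n}. lam j < p" unfolding lam_def using p1 by auto
    have "(\<Sum>j\<in>{2..n}. of_nat (lam j) * \<gamma> j) = (\<Sum>j\<in>{2..n}. if j = i then \<gamma> j else 0)"
      unfolding lam_def by (intro sum.cong) auto
    also have "\<dots> = \<gamma> i" using i by simp
    finally have "of_nat (lam 1) + (\<Sum>j\<in>{2..n}. of_nat (lam j) * \<gamma> j) = (of_nat ((p - m) mod p) + of_nat m :: 'k)"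
      unfolding lam_def using m by simp
    also have "\<dots> = 0"
    proof -
      have "(of_nat ((p - m) mod p) :: 'k) = of_nat (p - m)"
      proof -
        have "(of_nat (p - m) :: 'k) = of_nat (p * ((p - m) div p) + (p - m) mod p)" by simp
        also have "\<dots> = of_nat ((p - m) mod p)"
        proof -
          have pz: "(of_nat p :: 'k) = 0" using ch of_nat_CHAR by metis
          show ?thesis by (simp only: of_nat_add of_nat_mult pz mult_zero_left add_0)
        qed
        finally show ?thesis by simp
      qed
      moreover have "(of_nat (p - m) + of_nat m :: 'k) = of_nat p" using m by (simp flip: of_nat_add)
      moreover have "(of_nat p :: 'k) = 0" using ch of_nat_CHAR by metis
      ultimately show ?thesis by simp
    qed
    finally have "lam i = 0" using linind lp i by auto
    then show False unfolding lam_def using i1 by simp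
  qed
  have d2: "d \<ge> 2"
  proof (rule ccontr)
    assume "\<not> d \<ge> 2"
    then have "d = 1" using dpos by simp
    then show False using notFp[of 2] gd[of 2] n_ge2 unfolding Fq_def by auto
  qed
  have "d \<le> s0" using ds s01 by (intro dvd_imp_le) auto
  then have "s0 \<ge> 2" using d2 by simp
  show ?thesis
    apply (intro conjI)
    subgoal using s_eq1 unfolding s0_def by blast
    subgoal by (rule V1)
    subgoal
    proof (rule exI[of _ d], rule exI[of _ \<gamma>], intro conjI)
      show "d > 0" by (rule dpos)
      show "d dvd s 1" using ds s0_def by simp
      show "\<forall>i\<in>{2..n}. \<gamma> i \<in> Fq (p ^ d) - Fq p"
      proof
        fix i assume i: "i \<in> {2..n}"
        then have "i \<in> {1..n}" by auto
        then show "\<gamma> i \<in> Fq (p ^ d) - Fq p" using gd notFp[OF i] unfolding Fq_def by blast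
      qed
      show "\<forall>j\<le>s 1. \<not> d dvd j \<longrightarrow> a 1 j = 0" using ad s0_def by simp
      show "\<forall>i\<in>{2..n}. add_poly p (a i) (s i) = smult (\<gamma> i) (add_poly p (a 1) (s 1))"
      proof
        fix i assume i: "i \<in> {2..n}"
        then have "i \<in> {1..n}" by auto
        then show "add_poly p (a i) (s i) = smult (\<gamma> i) (add_poly p (a 1) (s 1))"
          using Sg unfolding S_def by blast
      qed
      show "\<forall>lam :: nat \<Rightarrow> nat. (\<forall>i\<in>{1..n}. lam i < p) \<longrightarrow>
                 of_nat (lam 1) + (\<Sum>i\<in>{2..n}. of_nat (lam i) * \<gamma> i) = (0::'k) \<longrightarrow>
                 (\<forall>i\<in>{1..n}. lam i = 0)" by (rule linind)
    qed
    subgoal using \<open>s0 \<ge> 2\<close> s0_def by simp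
    done
qed


end
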